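(* Let $d\ge 1$, $n\ge 1$, $r\ge 0$ be integers and let $N$ be a polynomial (with complex coefficients) in the components of $u\in\mathbb{C}^n$ and of all its spatial partial derivatives $D^\alpha u$, $|\alpha|\le r$, $x\in\mathbb{T}^d$. Let $s>s_0=d+r$ and $C>0$. Suppose $a=(a_k)_{k\in\mathbb{Z}^d}$, $a_k\in\mathbb{C}^n$, satisfies $|a_k|\le C/|k|^s$ for $k\neq 0$ and $|a_0|\le C$. Then the formal series defining $N_k(a)$, $\frac{\partial N_k}{\partial a_j}(a)$ and $\frac{\partial^2 N_k}{\partial a_{j_1}\partial a_{j_2}}(a)$ (for all $k,j,j_1,j_2\in\mathbb{Z}^d$) are absolutely convergent, and there exist constants $D=D(C,s)$, $D_1=D_1(C,s)$, $D_2=D_2(C,s)$ (depending also on the fixed $N$, $d$, $r$) such that for all $k,j,j_1,j_2\in\mathbb{Z}^d$: $$|N_k|\le \frac{D}{|k|^{s-r}}\ (k\neq 0),\qquad |N_0|\le D,$$ $$\left|\frac{\partial N_k}{\partial a_j}\right|\le \frac{D_1|j|^r}{|k-j|^{s-r}}\ (k\neq j),\qquad \left|\frac{\partial N_k}{\partial a_j}\right|\le D_1|j|^r\ (k=j),$$ $$\left|\frac{\partial^2 N_k}{\partial a_{j_1}\partial a_{j_2}}\right|\le \frac{D_2|j_1|^r|j_2|^r}{|k-j_1-j_2|^{s-r}}\ (k\neq j_1+j_2),\qquad \left|\frac{\partial^2 N_k}{\partial a_{j_1}\partial a_{j_2}}\right|\le D_2|j_1|^r|j_2|^r\ (k=j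_1+j_2).$$
   Context: $\mathbb{T}^d=(\mathbb{R}\bmod 2\pi)^d$. On $\mathbb{Z}^d$ a norm $|\cdot|$ is fixed satisfying $|(k_1,\dots,k_d)|\ge |k_j|$ for each $j$; by convention $|0|$ is redefined to be $1$ in these estimates. For $\alpha\in\mathbb{N}^d$, $D^\alpha$ denotes the partial derivative $\partial^{|\alpha|}/\partial x_1^{\alpha_1}\cdots\partial x_d^{\alpha_d}$, $|\alpha|=\sum\alpha_i$, and $k^\alpha=k_1^{\alpha_1}\cdots k_d^{\alpha_d}$. To a sequence $a=(a_k)$ associate the formal series $u=\sum_k a_k e^{\mathrm{i}k\cdot x}$, so $D^\alpha u$ has formal Fourier coefficients $\mathrm{i}^{|\alpha|}k^\alpha a_k$. $N_k(a)$ is the formal $k$-th Fourier coefficient of $N(u,Du,\dots,D^ru)$, obtained by expanding each monomial of $N$ as a convolution sum $\sum_{k_1+\dots+k_l=k} v_{k_1}\cdots v_{k_l}$ where each $v_{k_i}$ is a Fourier coefficient of a component of $u$ or of one of its derivatives of order $\le r$. The symbols for derivatives are the formal series $$\frac{\partial N_k}{\partial a_j}=\sum_{|\alpha|\le r}\Big(\frac{\partial N}{\partial(D^\alpha u)}(u,\dots,D^ru)\Big)_{k-j}\mathrm{i}^{|\alpha|}j^\alpha,$$ $$\frac{\partial^2 N_k}{\partial a_{j_1}\partial a_{j_2}}=\sum_{|\alpha_1|,|\alpha_2|\le r}\Big(\frac{\partial^2 N}{\partial(D^{\alpha_1}u)\partial(D^{\alpha_2}u)}(u,\dots,D^ru)\Big)_{k-j_1-j_2}\mathrm{i}^{|\alpha_1|+|\alpha_2|}j_1^{\alpha_1}j_2^{\alpha_2},$$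 where $\partial N/\partial(D^\alpha u)$ denotes the partial derivative of the polynomial $N$ with respect to the argument slot $D^\alpha u$, and $(\cdot)_m$ is the formal $m$-th Fourier coefficient (convolution expansion) of the resulting polynomial expression. *)

theory Defs
  imports "HOL-Analysis.Analysis"
begin

text \<open>Lattice points of Z^d are vectors of type int^'d; multi-indices are nat^'d.
  The solution coefficients a_k live in complex^'n (components of u in C^n).\<close>

definition is_Zd_norm :: "(int^'d \<Rightarrow> real) \<Rightarrow> bool" where
  "is_Zd_norm nrm \<longleftrightarrow>
     (\<forall>k i. \<bar>real_of_int (k $ i)\<bar> \<le> nrm k) \<and>
     (\<forall>k l. nrm (k + l) \<le> nrm k + nrm l) \<and>
     (\<forall>(m::int) k. nrm (m *s k) = real_of_int \<bar>m\<bar> * nrm k)"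

definition nrm0 :: "(int^'d \<Rightarrow> real) \<Rightarrow> int^'d \<Rightarrow> real" where
  "nrm0 nrm k = (if k = 0 then 1 else nrm k)"

definition mi_abs :: "nat^'d::finite \<Rightarrow> nat" where
  "mi_abs \<alpha> = (\<Sum>i\<in>UNIV. \<alpha> $ i)"

definition mi_pow :: "int^'d::finite \<Rightarrow> nat^'d \<Rightarrow> complex" where
  "mi_pow k \<alpha> = (\<Prod>i\<in>UNIV. of_int (k $ i) ^ (\<alpha> $ i))"

text \<open>A variable of the polynomial N: the c-th component of D^alpha u.
  A monomial is a list of variables (with repetition); a polynomial is a list
  of (coefficient, monomial) pairs.\<close>
type_synonym ('n,'d) pvar = "'n \<times> (nat^'d)"
type_synonym ('n,'d) poly_rep = "(complex \<times> ('n,'d) pvar list) list"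

text \<open>Fourier coefficient at wavenumber m of the variable (c, alpha), i.e. of
  the c-th component of D^alpha u:  i^|alpha| m^alpha (a_m)_c.\<close>
definition var_coeff :: "(int^'d \<Rightarrow> complex^'n) \<Rightarrow> int^'d \<Rightarrow> ('n,'d) pvar \<Rightarrow> complex" where
  "var_coeff a m v = \<i> ^ mi_abs (snd v) * mi_pow m (snd v) * (a m $ fst v)"

definition conv_set :: "nat \<Rightarrow> int^'d \<Rightarrow> (int^'d) list set" where
  "conv_set l k = {ms. length ms = l \<and> sum_list ms = k}"

definition conv_term :: "(int^'d \<Rightarrow> complex^'n) \<Rightarrow> ('n,'d) pvar list \<Rightarrow> (int^'d) list \<Rightarrow> complex" where
  "conv_term a vs ms = (\<Prod>(m,v)\<leftarrow>zip ms vs. var_coeff a m v)"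

text \<open>Formal k-th Fourier coefficient of a monomial (convolution sum).\<close>
definition mono_coeff :: "(int^'d \<Rightarrow> complex^'n) \<Rightarrow> ('n,'d) pvar list \<Rightarrow> int^'d \<Rightarrow> complex" where
  "mono_coeff a vs k = infsum (conv_term a vs) (conv_set (length vs) k)"

definition poly_coeff :: "(int^'d \<Rightarrow> complex^'n) \<Rightarrow> ('n,'d) poly_rep \<Rightarrow> int^'d \<Rightarrow> complex" where
  "poly_coeff a P k = (\<Sum>(c,vs)\<leftarrow>P. c * mono_coeff a vs k)"

definition poly_abs_conv :: "(int^'d \<Rightarrow> complex^'n) \<Rightarrow> ('n,'d) poly_rep \<Rightarrow> int^'d \<Rightarrow> bool" where
  "poly_abs_conv a P k \<longleftrightarrow>
     (\<forall>(c,vs)\<in>set P. (\<lambda>ms. norm (conv_term a vs ms)) summable_on conv_set (length vs) k)"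

definition remove_pos :: "nat set \<Rightarrow> 'a list \<Rightarrow> 'a list" where
  "remove_pos S xs = [xs ! i. i \<leftarrow> [0..<length xs], i \<notin> S]"

text \<open>Partial derivative of a polynomial with respect to the variable v.\<close>
definition dpoly :: "('n,'d) pvar \<Rightarrow> ('n,'d) poly_rep \<Rightarrow> ('n,'d) poly_rep" where
  "dpoly v P = concat (map (\<lambda>(c,vs).
      [(c, remove_pos {p} vs). p \<leftarrow> [0..<length vs], vs ! p = v]) P)"

definition d2poly :: "('n,'d) pvar \<Rightarrow> ('n,'d) pvar \<Rightarrow> ('n,'d) poly_rep \<Rightarrow> ('n,'d) poly_rep" where
  "d2poly v w P = concat (map (\<lambda>(c,vs).
      [(c, remove_pos {p, q} vs). p \<leftarrow> [0..<length vs], q \<leftarrow> [0..<length vs],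
                                 p \<noteq> q, vs ! p = v, vs ! q = w]) P)"

definition poly_order_le :: "nat \<Rightarrow> ('n,'d::finite) poly_rep \<Rightarrow> bool" where
  "poly_order_le r P \<longleftrightarrow> (\<forall>(c,vs)\<in>set P. \<forall>v\<in>set vs. mi_abs (snd v) \<le> r)"

definition mis_le :: "nat \<Rightarrow> (nat^'d) set" where
  "mis_le r = {\<alpha>. mi_abs \<alpha> \<le> r}"

definition Nk :: "('n \<Rightarrow> ('n,'d) poly_rep) \<Rightarrow> (int^'d \<Rightarrow> complex^'n) \<Rightarrow> int^'d \<Rightarrow> complex^'n" where
  "Nk N a k = (\<chi> e. poly_coeff a (N e) k)"

definition dNk :: "nat \<Rightarrow> ('n \<Rightarrow> ('n,'d) poly_rep) \<Rightarrow> (int^'d \<Rightarrow> complex^'n) \<Rightarrow>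
                   int^'d \<Rightarrow> int^'d \<Rightarrow> complex^'n^'n" where
  "dNk r N a k j = (\<chi> e c. \<Sum>\<alpha>\<in>mis_le r.
      poly_coeff a (dpoly (c,\<alpha>) (N e)) (k - j) * \<i> ^ mi_abs \<alpha> * mi_pow j \<alpha>)"

definition d2Nk :: "nat \<Rightarrow> ('n \<Rightarrow> ('n,'d) poly_rep) \<Rightarrow> (int^'d \<Rightarrow> complex^'n) \<Rightarrow>
                   int^'d \<Rightarrow> int^'d \<Rightarrow> int^'d \<Rightarrow> complex^'n^'n^'n" where
  "d2Nk r N a k j1 j2 = (\<chi> e c1 c2. \<Sum>\<alpha>1\<in>mis_le r. \<Sum>\<alpha>2\<in>mis_le r.
      poly_coeff a (d2poly (c1,\<alpha>1) (c2,\<alpha>2) (N e)) (k - j1 - j2)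
        * \<i> ^ (mi_abs \<alpha>1 + mi_abs \<alpha>2) * mi_pow j1 \<alpha>1 * mi_pow j2 \<alpha>2)"

end

theory Submission
  imports Defs "HOL-Library.FuncSet"
begin


lemma zn_zero: assumes "is_Zd_norm nrm" shows "nrm 0 = 0"
  using assms unfolding is_Zd_norm_def by (metis mult_eq_0_iff of_int_0 abs_zero scaleR_zero_left vector_smult_lzero)

lemma zn_comp: assumes "is_Zd_norm nrm" shows "\<bar>real_of_int (k $ i)\<bar> \<le> nrm k"
  using assms unfolding is_Zd_norm_def by blast

lemma zn_ge1: assumes "is_Zd_norm nrm" "k \<noteq> 0" shows "nrm k \<ge> 1"
proof -
  obtain i where "k $ i \<noteq> 0" using assms(2) by (metis vec_eq_iff zero_index)
  hence "1 \<le> \<bar>real_of_int (k $ i)\<bar>" by linarith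
  thus ?thesis using zn_comp[OF assms(1)] by (meson order_trans)
qed

lemma nrm0_ge1: assumes "is_Zd_norm nrm" shows "nrm0 nrm k \<ge> 1"
  using zn_ge1[OF assms] unfolding nrm0_def by auto

lemma nrm0_comp: assumes "is_Zd_norm nrm" shows "\<bar>real_of_int (k $ i)\<bar> \<le> nrm0 nrm k"
  using zn_comp[OF assms] unfolding nrm0_def by auto

lemma nrm_le_nrm0: assumes "is_Zd_norm nrm" shows "nrm k \<le> nrm0 nrm k"
  using zn_zero[OF assms] unfolding nrm0_def by auto

lemma nrm0_tri: assumes "is_Zd_norm nrm" shows "nrm0 nrm k \<le> nrm0 nrm m + nrm0 nrm (k - m)"
proof (cases "k = 0")
  case True thus ?thesis using nrm0_ge1[OF assms, of m] nrm0_ge1[OF assms, of "k-m"] by (simp add: nrm0_def)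
next
  case False
  have "nrm (m + (k - m)) \<le> nrm m + nrm (k - m)" using assms unfolding is_Zd_norm_def by blast
  thus ?thesis using False nrm_le_nrm0[OF assms, of m] nrm_le_nrm0[OF assms, of "k-m"] by (simp add: nrm0_def)
qed



lemma sum1d: assumes "\<tau> > 1"
  shows "(\<lambda>t::int. (1 + real_of_int \<bar>t\<bar>) powr (-\<tau>)) summable_on UNIV"
proof -
  let ?g = "\<lambda>t::int. (1 + real_of_int \<bar>t\<bar>) powr (-\<tau>)"
  have s0: "summable (\<lambda>n. real n powr (-\<tau>))" using assms summable_real_powr_iff by simp
  hence s1: "summable (\<lambda>n. real (Suc n) powr (-\<tau>))" by (subst summable_Suc_iff) 
  have s1': "summable (\<lambda>n. norm (real (Suc n) powr (-\<tau>)))" using s1 by simp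
  have h: "(\<lambda>n. (1 + real n) powr (-\<tau>)) summable_on UNIV"
    using norm_summable_imp_summable_on[OF s1'] by simp
  have a: "?g summable_on (int ` UNIV)"
    by (subst summable_on_reindex) (auto simp: o_def add.commute intro: h)
  have b: "?g summable_on ((\<lambda>n. - int n) ` UNIV)"
    by (subst summable_on_reindex) (auto simp: o_def add.commute inj_on_def intro: h)
  have "UNIV = int ` UNIV \<union> (\<lambda>n. - int n) ` UNIV"
  proof (intro set_eqI iffI)
    fix t :: int
    show "t \<in> int ` UNIV \<union> (\<lambda>n. - int n) ` UNIV"
    proof (cases "t \<ge> 0")
      case True thus ?thesis by (metis UnI1 nonneg_int_cases rangeI)
    next
      case False hence "t = - int (nat (-t))" by simp
      thus ?thesis by (metis UnI2 rangeI)
    qed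
  qed simp
  with summable_on_union[OF a b] show ?thesis by simp
qed

lemma sum1d_bound: assumes "\<tau> > 1"
  shows "\<exists>G. \<forall>T. finite T \<longrightarrow> (\<Sum>t\<in>T. (1 + real_of_int \<bar>t\<bar>) powr (-\<tau>)) \<le> G"
  using finite_sum_le_infsum[OF sum1d[OF assms]] by auto



lemma pw_bound:
  fixes m :: "int^'d"
  assumes "is_Zd_norm nrm" "\<sigma> > 0"
  shows "nrm0 nrm m powr (-\<sigma>) \<le> 2 powr \<sigma> * (\<Prod>i\<in>UNIV. (1 + real_of_int \<bar>m$i\<bar>) powr (-(\<sigma>/CARD('d))))"
proof -
  define R where "R = nrm0 nrm m"
  define \<tau> where "\<tau> = \<sigma>/CARD('d)"
  have R1: "R \<ge> 1" using nrm0_ge1[OF assms(1)] R_def by simp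
  have "(\<Prod>i\<in>UNIV. (1 + real_of_int \<bar>m$i\<bar>) powr \<tau>) \<le> (\<Prod>i\<in>(UNIV::'d set). (2*R) powr \<tau>)"
  proof (rule prod_mono, intro conjI)
    fix i :: 'd
    show "0 \<le> (1 + real_of_int \<bar>m$i\<bar>) powr \<tau>" by simp
    have "\<bar>real_of_int (m$i)\<bar> \<le> R" using nrm0_comp[OF assms(1)] R_def by simp
    hence "1 + real_of_int \<bar>m$i\<bar> \<le> 2*R" using R1 by simp
    thus "(1 + real_of_int \<bar>m$i\<bar>) powr \<tau> \<le> (2*R) powr \<tau>"
      using \<tau>_def assms(2) by (intro powr_mono2) auto
  qed
  also have "\<dots> = ((2*R) powr \<tau>) ^ CARD('d)" by simp
  also have "\<dots> = (2*R) powr (\<tau> * CARD('d))" using R1 by (simp add: powr_realpow[symmetric] powr_powr)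
  also have "\<dots> = 2 powr \<sigma> * R powr \<sigma>" using R1 \<tau>_def by (simp add: powr_mult)
  finally have le: "(\<Prod>i\<in>UNIV. (1 + real_of_int \<bar>m$i\<bar>) powr \<tau>) \<le> 2 powr \<sigma> * R powr \<sigma>" .
  have pos: "0 < (\<Prod>i\<in>UNIV. (1 + real_of_int \<bar>m$i\<bar>) powr \<tau>)"
    by (intro prod_pos) (smt (verit) abs_ge_zero of_int_nonneg powr_gt_zero)
  have eq: "(\<Prod>i\<in>UNIV. (1 + real_of_int \<bar>m$i\<bar>) powr (-\<tau>)) = inverse (\<Prod>i\<in>UNIV. (1 + real_of_int \<bar>m$i\<bar>) powr \<tau>)"
    by (simp add: powr_minus prod_inversef[symmetric] o_def)
  have "R powr (-\<sigma>) = inverse (R powr \<sigma>)" by (simp add: powr_minus)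
  also have "\<dots> = 2 powr \<sigma> * inverse (2 powr \<sigma> * R powr \<sigma>)" by simp
  also have "\<dots> \<le> 2 powr \<sigma> * inverse (\<Prod>i\<in>UNIV. (1 + real_of_int \<bar>m$i\<bar>) powr \<tau>)"
    using le pos by (intro mult_left_mono le_imp_inverse_le) auto
  finally show ?thesis using eq R_def \<tau>_def by simp
qed

lemma box_bound:
  fixes M :: "(int^'d) set"
  assumes "finite M" "\<forall>T. finite T \<longrightarrow> (\<Sum>t\<in>T. g t) \<le> G" "\<forall>t. g t \<ge> (0::real)"
  shows "(\<Sum>m\<in>M. \<Prod>i\<in>UNIV. g (m$i)) \<le> G ^ CARD('d)"
proof -
  define T where "T = (\<Union>i. (\<lambda>m. m$i) ` M)"
  have fT: "finite T" using assms(1) T_def by simp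
  define B where "B = (vec_lambda ` PiE (UNIV::'d set) (\<lambda>_. T) :: (int^'d) set)"
  have fB: "finite B" unfolding B_def using fT by (intro finite_imageI finite_PiE) auto
  have MB: "M \<subseteq> B"
  proof
    fix m assume "m \<in> M"
    hence "vec_nth m \<in> PiE UNIV (\<lambda>_. T)" unfolding T_def by auto
    thus "m \<in> B" unfolding B_def by (metis image_eqI vec_nth_inverse)
  qed
  have "(\<Sum>m\<in>M. \<Prod>i\<in>UNIV. g (m$i)) \<le> (\<Sum>m\<in>B. \<Prod>i\<in>UNIV. g (m$i))"
    using fB MB assms(3) by (intro sum_mono2) (auto intro: prod_nonneg)
  also have "\<dots> = (\<Sum>p\<in>PiE (UNIV::'d set) (\<lambda>_. T). \<Prod>i\<in>UNIV. g (p i))"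
    unfolding B_def by (subst sum.reindex) (auto simp: inj_on_def vec_lambda_inject)
  also have "\<dots> = (\<Prod>i\<in>(UNIV::'d set). \<Sum>t\<in>T. g t)"
    using prod_sum_PiE[of "UNIV::'d set" "\<lambda>_. T" "\<lambda>_ t. g t"] fT by simp
  also have "\<dots> \<le> (\<Prod>i\<in>(UNIV::'d set). G)"
    using fT assms by (intro prod_mono) (auto intro: sum_nonneg)
  finally show ?thesis by simp
qed



definition wgt :: "(int^'d \<Rightarrow> real) \<Rightarrow> real \<Rightarrow> int^'d \<Rightarrow> real" where
  "wgt nrm \<sigma> m = nrm0 nrm m powr (-\<sigma>)"

lemma wgt_pos: "is_Zd_norm nrm \<Longrightarrow> wgt nrm \<sigma> m > 0"
  unfolding wgt_def using nrm0_ge1[of nrm m] by simp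

lemma wgt_zero: "wgt nrm \<sigma> 0 = 1"
  unfolding wgt_def nrm0_def by simp

lemma wsum_bound:
  assumes "is_Zd_norm nrm" "\<sigma> > real CARD('d)"
  shows "\<exists>S. \<forall>M::(int^'d) set. finite M \<longrightarrow> sum (wgt nrm \<sigma>) M \<le> S"
proof -
  define \<tau> where "\<tau> = \<sigma>/CARD('d)"
  have "\<tau> > 1" using assms(2) \<tau>_def by simp
  then obtain G where G: "\<forall>T. finite T \<longrightarrow> (\<Sum>t\<in>T. (1 + real_of_int \<bar>t\<bar>) powr (-\<tau>)) \<le> G"
    using sum1d_bound by blast
  have s0: "\<sigma> > 0" using assms(2) by (smt (verit) of_nat_0_le_iff)
  show ?thesis
  proof (intro exI allI impI)
    fix M :: "(int^'d) set" assume fM: "finite M"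
    have "sum (wgt nrm \<sigma>) M \<le> (\<Sum>m\<in>M. 2 powr \<sigma> * (\<Prod>i\<in>UNIV. (1 + real_of_int \<bar>m$i\<bar>) powr (-\<tau>)))"
      unfolding wgt_def \<tau>_def using pw_bound[OF assms(1) s0] by (intro sum_mono) auto
    also have "\<dots> = 2 powr \<sigma> * (\<Sum>m\<in>M. \<Prod>i\<in>UNIV. (1 + real_of_int \<bar>m$i\<bar>) powr (-\<tau>))"
      by (simp add: sum_distrib_left)
    also have "\<dots> \<le> 2 powr \<sigma> * G ^ CARD('d)"
      using box_bound[OF fM G] by (intro mult_left_mono) auto
    finally show "sum (wgt nrm \<sigma>) M \<le> 2 powr \<sigma> * G ^ CARD('d)" .
  qed
qed

lemma powr_half:
  fixes x y :: real
  assumes "0 < x" "0 < y" "y \<le> 2 * x" "\<sigma> \<ge> 0"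
  shows "x powr (-\<sigma>) \<le> 2 powr \<sigma> * y powr (-\<sigma>)"
proof -
  have "y powr \<sigma> \<le> (2*x) powr \<sigma>" using assms by (intro powr_mono2) auto
  also have "\<dots> = 2 powr \<sigma> * x powr \<sigma>" using assms by (simp add: powr_mult)
  finally have le: "y powr \<sigma> \<le> 2 powr \<sigma> * x powr \<sigma>" .
  have "x powr (-\<sigma>) = 2 powr \<sigma> * inverse (2 powr \<sigma> * x powr \<sigma>)" by (simp add: powr_minus)
  also have "\<dots> \<le> 2 powr \<sigma> * inverse (y powr \<sigma>)"
    using le assms by (intro mult_left_mono le_imp_inverse_le) auto
  finally show ?thesis by (simp add: powr_minus)
qed

lemma conv_pw:
  assumes "is_Zd_norm nrm" "\<sigma> \<ge> 0"
  shows "wgt nrm \<sigma> m * wgt nrm \<sigma> (k - m) \<le> 2 powr \<sigma> * wgt nrm \<sigma> k * (wgt nrm \<sigma> m + wgt nrm \<sigma> (k - m))"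
proof -
  let ?w = "wgt nrm \<sigma>"
  have t: "nrm0 nrm k \<le> nrm0 nrm m + nrm0 nrm (k - m)" by (rule nrm0_tri[OF assms(1)])
  have p: "?w m > 0" "?w (k-m) > 0" "?w k > 0" using wgt_pos[OF assms(1)] by auto
  show ?thesis
  proof (cases "nrm0 nrm m \<ge> nrm0 nrm (k - m)")
    case True
    hence "?w m \<le> 2 powr \<sigma> * ?w k" unfolding wgt_def using t assms(2) nrm0_ge1[OF assms(1), of m] nrm0_ge1[OF assms(1), of k] nrm0_ge1[OF assms(1), of "k-m"]
      by (intro powr_half) linarith+
    hence "?w m * ?w (k-m) \<le> 2 powr \<sigma> * ?w k * ?w (k-m)" using p by (intro mult_right_mono) auto
    also have "\<dots> \<le> 2 powr \<sigma> * ?w k * (?w m + ?w (k-m))" using p by (intro mult_left_mono) auto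
    finally show ?thesis .
  next
    case False
    hence "?w (k-m) \<le> 2 powr \<sigma> * ?w k" unfolding wgt_def using t assms(2) nrm0_ge1[OF assms(1), of m] nrm0_ge1[OF assms(1), of k] nrm0_ge1[OF assms(1), of "k-m"]
      by (intro powr_half) linarith+
    hence "?w m * ?w (k-m) \<le> ?w m * (2 powr \<sigma> * ?w k)" using p by (intro mult_left_mono) auto
    also have "\<dots> \<le> 2 powr \<sigma> * ?w k * (?w m + ?w (k-m))" using p by (simp add: algebra_simps)
    finally show ?thesis .
  qed
qed

lemma conv_bound:
  assumes "is_Zd_norm nrm" "\<sigma> \<ge> 0" "\<forall>M. finite M \<longrightarrow> sum (wgt nrm \<sigma>) M \<le> S" "finite M"
  shows "(\<Sum>m\<in>M. wgt nrm \<sigma> m * wgt nrm \<sigma> (k - m)) \<le> 2 * 2 powr \<sigma> * S * wgt nrm \<sigma> k"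
proof -
  let ?w = "wgt nrm \<sigma>"
  have "(\<Sum>m\<in>M. ?w m * ?w (k - m)) \<le> (\<Sum>m\<in>M. 2 powr \<sigma> * ?w k * (?w m + ?w (k - m)))"
    by (intro sum_mono conv_pw[OF assms(1,2)])
  also have "\<dots> = 2 powr \<sigma> * ?w k * (sum ?w M + (\<Sum>m\<in>M. ?w (k - m)))"
    by (simp add: distrib_left sum.distrib sum_distrib_left)
  also have "(\<Sum>m\<in>M. ?w (k - m)) = sum ?w ((\<lambda>m. k - m) ` M)"
    by (subst sum.reindex) (auto simp: inj_on_def)
  also have "2 powr \<sigma> * ?w k * (sum ?w M + sum ?w ((\<lambda>m. k - m) ` M)) \<le> 2 powr \<sigma> * ?w k * (S + S)"
    using assms(3,4) wgt_pos[OF assms(1)] by (intro mult_left_mono add_mono) (auto intro: less_imp_le)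
  finally show ?thesis by (simp add: algebra_simps)
qed



lemma iter_bound:
  assumes "is_Zd_norm nrm" "\<sigma> \<ge> 0" "\<forall>M. finite M \<longrightarrow> sum (wgt nrm \<sigma>) M \<le> S" "K \<ge> 1"
    "K \<ge> 2 * 2 powr \<sigma> * S"
  shows "finite F \<Longrightarrow> F \<subseteq> conv_set l k \<Longrightarrow>
     (\<Sum>ms\<in>F. prod_list (map (wgt nrm \<sigma>) ms)) \<le> K^l * wgt nrm \<sigma> k"
proof (induction l arbitrary: k F)
  case 0
  let ?w = "wgt nrm \<sigma>"
  have sub: "F \<subseteq> {[]}" using 0(2) unfolding conv_set_def by auto
  show ?case
  proof (cases "F = {}")
    case True thus ?thesis using wgt_pos[OF assms(1)] by (simp add: less_imp_le)
  next
    case False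
    hence F: "F = {[]}" using sub by blast
    hence "k = 0" using 0(2) unfolding conv_set_def by auto
    thus ?thesis using F by (simp add: wgt_zero)
  qed
next
  case (Suc l)
  let ?w = "wgt nrm \<sigma>"
  let ?f = "\<lambda>ms. prod_list (map ?w ms)"
  define M where "M = hd ` F"
  have fM: "finite M" using Suc.prems(1) M_def by simp
  have lenF: "\<And>x. x \<in> F \<Longrightarrow> x = hd x # tl x \<and> length (tl x) = l \<and> sum_list (tl x) = k - hd x"
  proof -
    fix x assume "x \<in> F"
    hence x: "length x = Suc l" "sum_list x = k" using Suc.prems(2) unfolding conv_set_def by auto
    then obtain a t where "x = a # t" by (cases x) auto
    thus "x = hd x # tl x \<and> length (tl x) = l \<and> sum_list (tl x) = k - hd x" using x by auto
  qed
  have "(\<Sum>ms\<in>F. ?f ms) = (\<Sum>m\<in>M. \<Sum>ms\<in>{x\<in>F. hd x = m}. ?f ms)"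
    using sum.group[OF Suc.prems(1) fM, of hd ?f] M_def by simp
  also have "\<dots> \<le> (\<Sum>m\<in>M. ?w m * (K^l * ?w (k - m)))"
  proof (rule sum_mono)
    fix m assume "m \<in> M"
    define Fm where "Fm = {x\<in>F. hd x = m}"
    have fFm: "finite Fm" using Suc.prems(1) Fm_def by simp
    have "(\<Sum>ms\<in>Fm. ?f ms) = (\<Sum>ms\<in>Fm. ?w m * ?f (tl ms))"
    proof (rule sum.cong)
      fix x assume "x \<in> Fm"
      hence "x \<in> F" "hd x = m" using Fm_def by auto
      hence "x = m # tl x" using lenF by metis
      thus "?f x = ?w m * ?f (tl x)" by (metis list.simps(9) prod_list.Cons)
    qed simp
    also have "\<dots> = ?w m * (\<Sum>ms\<in>Fm. ?f (tl ms))" by (simp add: sum_distrib_left)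
    also have "(\<Sum>ms\<in>Fm. ?f (tl ms)) = (\<Sum>t\<in>tl ` Fm. ?f t)"
    proof (rule sum.reindex[symmetric, unfolded o_def])
      show "inj_on tl Fm"
      proof (rule inj_onI)
        fix x y assume "x \<in> Fm" "y \<in> Fm" "tl x = tl y"
        thus "x = y" using lenF Fm_def by (metis (mono_tags, lifting) mem_Collect_eq)
      qed
    qed
    also have "?w m * (\<Sum>t\<in>tl ` Fm. ?f t) \<le> ?w m * (K^l * ?w (k - m))"
    proof (rule mult_left_mono)
      show "(\<Sum>t\<in>tl ` Fm. ?f t) \<le> K^l * ?w (k - m)"
      proof (rule Suc.IH)
        show "finite (tl ` Fm)" using fFm by simp
        show "tl ` Fm \<subseteq> conv_set l (k - m)"
          unfolding conv_set_def using lenF Fm_def by auto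
      qed
      show "0 \<le> ?w m" using wgt_pos[OF assms(1)] less_imp_le by blast
    qed
    finally show "(\<Sum>ms\<in>{x\<in>F. hd x = m}. ?f ms) \<le> ?w m * (K^l * ?w (k - m))" unfolding Fm_def .
  qed
  also have "\<dots> = K^l * (\<Sum>m\<in>M. ?w m * ?w (k - m))"
    by (simp add: sum_distrib_left algebra_simps)
  also have "\<dots> \<le> K^l * (2 * 2 powr \<sigma> * S * ?w k)"
    using conv_bound[OF assms(1,2,3) fM] assms(4) by (intro mult_left_mono) auto
  also have "\<dots> \<le> K^l * (K * ?w k)"
    using assms(4,5) wgt_pos[OF assms(1), of \<sigma> k]
    by (intro mult_left_mono mult_right_mono) auto
  finally show ?case by (simp add: algebra_simps)
qed



lemma mi_pow_bound:
  assumes "is_Zd_norm nrm"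
  shows "norm (mi_pow m \<alpha>) \<le> nrm0 nrm m ^ mi_abs \<alpha>"
proof -
  have "norm (mi_pow m \<alpha>) = (\<Prod>i\<in>UNIV. \<bar>real_of_int (m$i)\<bar> ^ (\<alpha>$i))"
    unfolding mi_pow_def by (simp add: prod_norm[symmetric] norm_power)
  also have "\<dots> \<le> (\<Prod>i\<in>UNIV. nrm0 nrm m ^ (\<alpha>$i))"
    using nrm0_comp[OF assms] by (intro prod_mono conjI power_mono) auto
  also have "\<dots> = nrm0 nrm m ^ mi_abs \<alpha>" unfolding mi_abs_def by (simp add: power_sum)
  finally show ?thesis .
qed

lemma mi_pow_bound_r:
  assumes "is_Zd_norm nrm" "mi_abs \<alpha> \<le> r"
  shows "norm (mi_pow m \<alpha>) \<le> nrm0 nrm m ^ r"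
  using mi_pow_bound[OF assms(1)] power_increasing[OF assms(2) nrm0_ge1[OF assms(1)]] order_trans by blast

definition hypA :: "(int^'d \<Rightarrow> real) \<Rightarrow> real \<Rightarrow> real \<Rightarrow> (int^'d \<Rightarrow> complex^'n) \<Rightarrow> bool" where
  "hypA nrm s C a \<longleftrightarrow> (\<forall>k. k \<noteq> 0 \<longrightarrow> norm (a k) \<le> C / nrm k powr s) \<and> norm (a 0) \<le> C"

lemma a_bound:
  assumes "is_Zd_norm nrm" "hypA nrm s C a"
  shows "norm (a m) \<le> C * nrm0 nrm m powr (-s)"
proof (cases "m = 0")
  case True thus ?thesis using assms(2) unfolding hypA_def nrm0_def by simp
next
  case False
  have "nrm m \<ge> 1" using zn_ge1[OF assms(1) False] .
  thus ?thesis using assms(2) False unfolding hypA_def nrm0_def by (simp add: powr_minus_divide)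
qed

lemma var_bound:
  assumes "is_Zd_norm nrm" "hypA nrm s C a" "mi_abs (snd v) \<le> r"
  shows "norm (var_coeff a m v) \<le> C * wgt nrm (s - r) m"
proof -
  have R: "nrm0 nrm m \<ge> 1" using nrm0_ge1[OF assms(1)] .
  have C: "C \<ge> 0" using assms(2) unfolding hypA_def by (meson norm_ge_zero order_trans)
  have "norm (var_coeff a m v) = norm (mi_pow m (snd v)) * norm (a m $ fst v)"
    unfolding var_coeff_def by (simp add: norm_mult norm_power)
  also have "\<dots> \<le> nrm0 nrm m ^ r * (C * nrm0 nrm m powr (-s))"
  proof (rule mult_mono)
    show "norm (mi_pow m (snd v)) \<le> nrm0 nrm m ^ r" using mi_pow_bound_r[OF assms(1,3)] .
    show "norm (a m $ fst v) \<le> C * nrm0 nrm m powr (-s)"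
      using a_bound[OF assms(1,2), of m] Finite_Cartesian_Product.norm_nth_le[of "a m" "fst v"] by linarith
  qed (use R in auto)
  also have "\<dots> = C * (nrm0 nrm m powr real r * nrm0 nrm m powr (-s))"
    using R by (simp add: powr_realpow)
  also have "\<dots> = C * wgt nrm (s - r) m" unfolding wgt_def using R by (simp add: powr_add[symmetric])
  finally show ?thesis .
qed

lemma conv_term_Cons: "conv_term a (v # vs) (m # ms) = var_coeff a m v * conv_term a vs ms"
  unfolding conv_term_def by simp

lemma term_bound:
  assumes "is_Zd_norm nrm" "hypA nrm s C a"
  shows "length ms = length vs \<Longrightarrow> \<forall>v\<in>set vs. mi_abs (snd v) \<le> r \<Longrightarrow>
    norm (conv_term a vs ms) \<le> C ^ length vs * prod_list (map (wgt nrm (s - r)) ms)"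
proof (induction vs arbitrary: ms)
  case Nil thus ?case by (simp add: conv_term_def)
next
  case (Cons v vs)
  then obtain m ms' where ms: "ms = m # ms'" by (cases ms) auto
  have C: "C \<ge> 0" using assms(2) unfolding hypA_def by (meson norm_ge_zero order_trans)
  have "norm (conv_term a (v # vs) ms) = norm (var_coeff a m v) * norm (conv_term a vs ms')"
    using ms by (simp add: conv_term_Cons norm_mult)
  also have "\<dots> \<le> (C * wgt nrm (s - r) m) * (C ^ length vs * prod_list (map (wgt nrm (s - r)) ms'))"
    using Cons ms var_bound[OF assms, of v r m] C wgt_pos[OF assms(1), of "s - r" m] by (intro mult_mono) auto
  finally show ?case using ms by (simp add: algebra_simps)
qed



lemma mono_bound:
  assumes "is_Zd_norm nrm" "hypA nrm s C a" "\<sigma> = s - r" "\<sigma> \<ge> 0"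
    "\<forall>M. finite M \<longrightarrow> sum (wgt nrm \<sigma>) M \<le> S" "K \<ge> 1" "K \<ge> 2 * 2 powr \<sigma> * S"
    "\<forall>v\<in>set vs. mi_abs (snd v) \<le> r"
  shows "(\<lambda>ms. norm (conv_term a vs ms)) summable_on conv_set (length vs) k \<and>
         norm (mono_coeff a vs k) \<le> (C*K)^length vs * wgt nrm \<sigma> k"
proof -
  let ?l = "length vs"
  have C: "C \<ge> 0" using assms(2) unfolding hypA_def by (meson norm_ge_zero order_trans)
  have fb: "(\<Sum>ms\<in>F. norm (conv_term a vs ms)) \<le> (C*K)^?l * wgt nrm \<sigma> k"
    if "finite F" "F \<subseteq> conv_set ?l k" for F
  proof -
    have "(\<Sum>ms\<in>F. norm (conv_term a vs ms)) \<le> (\<Sum>ms\<in>F. C^?l * prod_list (map (wgt nrm \<sigma>) ms))"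
    proof (rule sum_mono)
      fix ms assume "ms \<in> F"
      hence "length ms = ?l" using that(2) unfolding conv_set_def by auto
      thus "norm (conv_term a vs ms) \<le> C^?l * prod_list (map (wgt nrm \<sigma>) ms)"
        using term_bound[OF assms(1,2), of ms vs r] assms(3,8) by simp
    qed
    also have "\<dots> = C^?l * (\<Sum>ms\<in>F. prod_list (map (wgt nrm \<sigma>) ms))" by (simp add: sum_distrib_left)
    also have "\<dots> \<le> C^?l * (K^?l * wgt nrm \<sigma> k)"
      using iter_bound[OF assms(1,4,5,6,7) that] C by (intro mult_left_mono) auto
    finally show ?thesis by (simp add: power_mult_distrib)
  qed
  have sm: "(\<lambda>ms. norm (conv_term a vs ms)) summable_on conv_set ?l k"
    by (rule nonneg_bdd_above_summable_on) (auto intro!: bdd_aboveI2 fb)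
  have "norm (mono_coeff a vs k) \<le> infsum (\<lambda>ms. norm (conv_term a vs ms)) (conv_set ?l k)"
    unfolding mono_coeff_def using sm by (rule norm_infsum_bound)
  also have "\<dots> \<le> (C*K)^?l * wgt nrm \<sigma> k"
    using sm fb by (rule infsum_le_finite_sums)
  finally show ?thesis using sm by simp
qed

definition BP :: "real \<Rightarrow> ('n,'d) poly_rep \<Rightarrow> real" where
  "BP CK P = (\<Sum>(c,vs)\<leftarrow>P. norm c * CK ^ length vs)"

lemma poly_bound:
  assumes "is_Zd_norm nrm" "hypA nrm s C a" "\<sigma> = s - r" "\<sigma> \<ge> 0"
    "\<forall>M. finite M \<longrightarrow> sum (wgt nrm \<sigma>) M \<le> S" "K \<ge> 1" "K \<ge> 2 * 2 powr \<sigma> * S"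
  shows "poly_order_le r P \<Longrightarrow> poly_abs_conv a P k \<and>
         norm (poly_coeff a P k) \<le> BP (C*K) P * wgt nrm \<sigma> k"
proof (induction P)
  case Nil thus ?case by (simp add: poly_abs_conv_def poly_coeff_def BP_def)
next
  case (Cons x P)
  obtain c vs where x: "x = (c, vs)" by fastforce
  have o: "poly_order_le r P" using Cons.prems unfolding poly_order_le_def by auto
  have ovs: "\<forall>v\<in>set vs. mi_abs (snd v) \<le> r" using Cons.prems x unfolding poly_order_le_def by auto
  note IH = Cons.IH[OF o]
  note mb = mono_bound[OF assms ovs, of k]
  have "poly_abs_conv a (x # P) k" using IH mb x unfolding poly_abs_conv_def by auto
  moreover have "norm (poly_coeff a (x # P) k) \<le> BP (C*K) (x # P) * wgt nrm \<sigma> k"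
  proof -
    have "poly_coeff a (x # P) k = c * mono_coeff a vs k + poly_coeff a P k"
      using x by (simp add: poly_coeff_def)
    hence "norm (poly_coeff a (x # P) k) \<le> norm c * norm (mono_coeff a vs k) + norm (poly_coeff a P k)"
      by (metis norm_mult norm_triangle_ineq)
    also have "\<dots> \<le> norm c * ((C*K)^length vs * wgt nrm \<sigma> k) + BP (C*K) P * wgt nrm \<sigma> k"
      using IH mb by (intro add_mono mult_left_mono) auto
    also have "\<dots> = BP (C*K) (x # P) * wgt nrm \<sigma> k" using x by (simp add: BP_def algebra_simps)
    finally show ?thesis .
  qed
  ultimately show ?case by blast
qed

lemma set_remove_pos: "set (remove_pos S xs) \<subseteq> set xs"
  unfolding remove_pos_def by auto

lemma order_dpoly: "poly_order_le r P \<Longrightarrow> poly_order_le r (dpoly v P)"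
  unfolding poly_order_le_def dpoly_def using set_remove_pos by fastforce

lemma order_d2poly: "poly_order_le r P \<Longrightarrow> poly_order_le r (d2poly v w P)"
  unfolding poly_order_le_def d2poly_def using set_remove_pos by fastforce

lemma norm_vec_le_sum: "norm (x :: 'a::real_normed_vector^'n) \<le> (\<Sum>i\<in>UNIV. norm (x$i))"
  by (simp add: norm_vec_def L2_set_le_sum)

lemma finite_mis_le: "finite (mis_le r :: (nat^'d) set)"
proof -
  have "mis_le r \<subseteq> (vec_lambda ` PiE (UNIV::'d set) (\<lambda>_. {..r}) :: (nat^'d) set)"
  proof
    fix \<alpha> :: "nat^'d" assume a: "\<alpha> \<in> mis_le r"
    have "\<And>i. \<alpha>$i \<le> r"
    proof -
      fix i
      have "\<alpha>$i \<le> (\<Sum>i\<in>UNIV. \<alpha>$i)" by (rule member_le_sum) auto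
      thus "\<alpha>$i \<le> r" using a unfolding mis_le_def mi_abs_def by simp
    qed
    hence "vec_nth \<alpha> \<in> PiE UNIV (\<lambda>_. {..r})" by auto
    thus "\<alpha> \<in> vec_lambda ` PiE UNIV (\<lambda>_. {..r})" by (metis image_eqI vec_nth_inverse)
  qed
  moreover have "finite (vec_lambda ` PiE (UNIV::'d set) (\<lambda>_. {..r}) :: (nat^'d) set)"
    by (intro finite_imageI finite_PiE) auto
  ultimately show ?thesis by (rule finite_subset)
qed



theorem mainTheorem1:
  fixes N :: "'n::finite \<Rightarrow> ('n, 'd::finite) poly_rep"
    and r :: nat and s C :: real
    and nrm :: "int^'d \<Rightarrow> real"
  assumes "is_Zd_norm nrm"
    and "\<forall>e. poly_order_le r (N e)"
    and "s > real (CARD('d) + r)"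
    and "C > 0"
  shows "\<exists>D D1 D2. \<forall>a :: int^'d \<Rightarrow> complex^'n.
     ((\<forall>k. k \<noteq> 0 \<longrightarrow> norm (a k) \<le> C / nrm k powr s) \<and> norm (a 0) \<le> C) \<longrightarrow>
     ((\<forall>k e. poly_abs_conv a (N e) k) \<and>
      (\<forall>k e c \<alpha>. poly_abs_conv a (dpoly (c,\<alpha>) (N e)) k) \<and>
      (\<forall>k e c1 c2 \<alpha>1 \<alpha>2. poly_abs_conv a (d2poly (c1,\<alpha>1) (c2,\<alpha>2) (N e)) k) \<and>
      (\<forall>k. k \<noteq> 0 \<longrightarrow> norm (Nk N a k) \<le> D / nrm k powr (s - real r)) \<and>
      norm (Nk N a 0) \<le> D \<and>
      (\<forall>k j. k \<noteq> j \<longrightarrow>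
          norm (dNk r N a k j) \<le> D1 * nrm0 nrm j ^ r / nrm (k - j) powr (s - real r)) \<and>
      (\<forall>j. norm (dNk r N a j j) \<le> D1 * nrm0 nrm j ^ r) \<and>
      (\<forall>k j1 j2. k \<noteq> j1 + j2 \<longrightarrow>
          norm (d2Nk r N a k j1 j2)
            \<le> D2 * nrm0 nrm j1 ^ r * nrm0 nrm j2 ^ r / nrm (k - j1 - j2) powr (s - real r)) \<and>
      (\<forall>j1 j2. norm (d2Nk r N a (j1 + j2) j1 j2) \<le> D2 * nrm0 nrm j1 ^ r * nrm0 nrm j2 ^ r))"
proof -
  define \<sigma> where "\<sigma> = s - real r"
  have \<sigma>d: "\<sigma> > real CARD('d)" using assms(3) \<sigma>_def by simp
  have \<sigma>0: "\<sigma> \<ge> 0" using \<sigma>d by (smt (verit) of_nat_0_le_iff)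
  obtain S where S: "\<forall>M::(int^'d) set. finite M \<longrightarrow> sum (wgt nrm \<sigma>) M \<le> S"
    using wsum_bound[OF assms(1) \<sigma>d] by blast
  define K where "K = max 1 (2 * 2 powr \<sigma> * S)"
  have K1: "K \<ge> 1" "K \<ge> 2 * 2 powr \<sigma> * S" by (auto simp: K_def)
  define B where "B = (BP (C*K) :: ('n,'d) poly_rep \<Rightarrow> real)"
  define D where "D = (\<Sum>e\<in>UNIV. B (N e))"
  define D1 where "D1 = (\<Sum>e\<in>UNIV. \<Sum>c\<in>UNIV. \<Sum>\<alpha>\<in>mis_le r. B (dpoly (c,\<alpha>) (N e)))"
  define D2 where "D2 = (\<Sum>e\<in>UNIV. \<Sum>c1\<in>UNIV. \<Sum>c2\<in>UNIV. \<Sum>\<alpha>1\<in>mis_le r. \<Sum>\<alpha>2\<in>mis_le r.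
                           B (d2poly (c1,\<alpha>1) (c2,\<alpha>2) (N e)))"
  show ?thesis
  proof (intro exI allI impI)
    fix a :: "int^'d \<Rightarrow> complex^'n"
    assume ha: "(\<forall>k. k \<noteq> 0 \<longrightarrow> norm (a k) \<le> C / nrm k powr s) \<and> norm (a 0) \<le> C"
    hence hA: "hypA nrm s C a" unfolding hypA_def .
    note PB = poly_bound[OF assms(1) hA \<sigma>_def \<sigma>0 S K1]
    have ord0: "\<And>e. poly_order_le r (N e)" using assms(2) by auto
    have ord1: "\<And>e v. poly_order_le r (dpoly v (N e))" using order_dpoly ord0 by blast
    have ord2: "\<And>e v w. poly_order_le r (d2poly v w (N e))" using order_d2poly ord0 by blast
    have PB0: "\<And>e k. norm (poly_coeff a (N e) k) \<le> B (N e) * wgt nrm \<sigma> k"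
      using PB[OF ord0] B_def by blast
    have PB1: "\<And>e v k. norm (poly_coeff a (dpoly v (N e)) k) \<le> B (dpoly v (N e)) * wgt nrm \<sigma> k"
      using PB[OF ord1] B_def by blast
    have PB2: "\<And>e v w k. norm (poly_coeff a (d2poly v w (N e)) k) \<le> B (d2poly v w (N e)) * wgt nrm \<sigma> k"
      using PB[OF ord2] B_def by blast
    have w_nz: "\<And>k. k \<noteq> 0 \<Longrightarrow> wgt nrm \<sigma> k = 1 / nrm k powr (s - real r)"
    proof -
      fix k :: "int^'d" assume "k \<noteq> 0"
      hence "wgt nrm \<sigma> k = nrm k powr (- (s - real r))" unfolding wgt_def nrm0_def \<sigma>_def by simp
      also have "\<dots> = 1 / nrm k powr (s - real r)" by (rule powr_minus_divide)
      finally show "wgt nrm \<sigma> k = 1 / nrm k powr (s - real r)" .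
    qed
    have R0: "\<And>j. nrm0 nrm j ^ r \<ge> 0" using nrm0_ge1[OF assms(1)] by (smt (verit) zero_le_power)
    have mp: "\<And>j \<alpha>. \<alpha> \<in> mis_le r \<Longrightarrow> norm (mi_pow j \<alpha>) \<le> nrm0 nrm j ^ r"
      using mi_pow_bound_r[OF assms(1)] unfolding mis_le_def by blast

    have nk: "\<And>k. norm (Nk N a k) \<le> D * wgt nrm \<sigma> k"
    proof -
      fix k
      have "norm (Nk N a k) \<le> (\<Sum>e\<in>UNIV. norm (Nk N a k $ e))" by (rule norm_vec_le_sum)
      also have "\<dots> \<le> (\<Sum>e\<in>UNIV. B (N e) * wgt nrm \<sigma> k)"
        unfolding Nk_def using PB0 by (intro sum_mono) simp
      also have "\<dots> = D * wgt nrm \<sigma> k" unfolding D_def by (simp add: sum_distrib_right)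
      finally show "norm (Nk N a k) \<le> D * wgt nrm \<sigma> k" .
    qed

    have dk: "\<And>k j. norm (dNk r N a k j) \<le> D1 * (wgt nrm \<sigma> (k - j) * nrm0 nrm j ^ r)"
    proof -
      fix k j
      let ?W = "wgt nrm \<sigma> (k - j)" and ?R = "nrm0 nrm j ^ r"
      have ent: "norm (dNk r N a k j $ e $ c) \<le> (\<Sum>\<alpha>\<in>mis_le r. B (dpoly (c,\<alpha>) (N e))) * (?W * ?R)" for e c
      proof -
        have "norm (dNk r N a k j $ e $ c) \<le> (\<Sum>\<alpha>\<in>mis_le r.
               norm (poly_coeff a (dpoly (c,\<alpha>) (N e)) (k - j) * \<i> ^ mi_abs \<alpha> * mi_pow j \<alpha>))"
          unfolding dNk_def by (simp add: norm_sum)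
        also have "\<dots> \<le> (\<Sum>\<alpha>\<in>mis_le r. B (dpoly (c,\<alpha>) (N e)) * ?W * ?R)"
        proof (rule sum_mono)
          fix \<alpha> :: "nat^'d" assume "\<alpha> \<in> mis_le r"
          have "norm (poly_coeff a (dpoly (c,\<alpha>) (N e)) (k - j) * \<i> ^ mi_abs \<alpha> * mi_pow j \<alpha>)
               = norm (poly_coeff a (dpoly (c,\<alpha>) (N e)) (k - j)) * norm (mi_pow j \<alpha>)"
            by (simp add: norm_mult norm_power)
          also have "\<dots> \<le> (B (dpoly (c,\<alpha>) (N e)) * ?W) * ?R"
            using PB1 mp[OF \<open>\<alpha> \<in> mis_le r\<close>] order_trans[OF norm_ge_zero PB1[of "(c,\<alpha>)" e "k - j"]]
            by (intro mult_mono) auto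
          finally show "norm (poly_coeff a (dpoly (c,\<alpha>) (N e)) (k - j) * \<i> ^ mi_abs \<alpha> * mi_pow j \<alpha>)
               \<le> B (dpoly (c,\<alpha>) (N e)) * ?W * ?R" .
        qed
        also have "\<dots> = (\<Sum>\<alpha>\<in>mis_le r. B (dpoly (c,\<alpha>) (N e))) * (?W * ?R)"
          by (simp add: sum_distrib_right mult.assoc)
        finally show ?thesis .
      qed
      have "norm (dNk r N a k j) \<le> (\<Sum>e\<in>UNIV. norm (dNk r N a k j $ e))" by (rule norm_vec_le_sum)
      also have "\<dots> \<le> (\<Sum>e\<in>UNIV. \<Sum>c\<in>UNIV. norm (dNk r N a k j $ e $ c))"
        by (intro sum_mono norm_vec_le_sum)
      also have "\<dots> \<le> (\<Sum>e\<in>UNIV. \<Sum>c\<in>UNIV. (\<Sum>\<alpha>\<in>mis_le r. B (dpoly (c,\<alpha>) (N e))) * (?W * ?R))"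
        by (intro sum_mono ent)
      also have "\<dots> = D1 * (?W * ?R)" unfolding D1_def by (simp add: sum_distrib_right)
      finally show "norm (dNk r N a k j) \<le> D1 * (?W * ?R)" .
    qed

    have d2k: "\<And>k j1 j2. norm (d2Nk r N a k j1 j2) \<le> D2 * (wgt nrm \<sigma> (k - j1 - j2) * (nrm0 nrm j1 ^ r * nrm0 nrm j2 ^ r))"
    proof -
      fix k j1 j2
      let ?W = "wgt nrm \<sigma> (k - j1 - j2)" and ?R = "nrm0 nrm j1 ^ r * nrm0 nrm j2 ^ r"
      have ent: "norm (d2Nk r N a k j1 j2 $ e $ c1 $ c2) \<le>
         (\<Sum>\<alpha>1\<in>mis_le r. \<Sum>\<alpha>2\<in>mis_le r. B (d2poly (c1,\<alpha>1) (c2,\<alpha>2) (N e))) * (?W * ?R)" for e c1 c2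
      proof -
        have "norm (d2Nk r N a k j1 j2 $ e $ c1 $ c2) \<le> (\<Sum>\<alpha>1\<in>mis_le r. \<Sum>\<alpha>2\<in>mis_le r.
               norm (poly_coeff a (d2poly (c1,\<alpha>1) (c2,\<alpha>2) (N e)) (k - j1 - j2)
                 * \<i> ^ (mi_abs \<alpha>1 + mi_abs \<alpha>2) * mi_pow j1 \<alpha>1 * mi_pow j2 \<alpha>2))"
          unfolding d2Nk_def by (simp add: norm_sum order_trans[OF norm_sum sum_mono])
        also have "\<dots> \<le> (\<Sum>\<alpha>1\<in>mis_le r. \<Sum>\<alpha>2\<in>mis_le r. B (d2poly (c1,\<alpha>1) (c2,\<alpha>2) (N e)) * (?W * ?R))"
        proof (intro sum_mono)
          fix \<alpha>1 \<alpha>2 :: "nat^'d" assume a1: "\<alpha>1 \<in> mis_le r" and a2: "\<alpha>2 \<in> mis_le r"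
          let ?p = "poly_coeff a (d2poly (c1,\<alpha>1) (c2,\<alpha>2) (N e)) (k - j1 - j2)"
          have "norm (?p * \<i> ^ (mi_abs \<alpha>1 + mi_abs \<alpha>2) * mi_pow j1 \<alpha>1 * mi_pow j2 \<alpha>2)
               = norm ?p * (norm (mi_pow j1 \<alpha>1) * norm (mi_pow j2 \<alpha>2))"
            by (simp add: norm_mult norm_power)
          also have "\<dots> \<le> (B (d2poly (c1,\<alpha>1) (c2,\<alpha>2) (N e)) * ?W) * ?R"
            using PB2 mp[OF a1] mp[OF a2] R0 order_trans[OF norm_ge_zero PB2[of "(c1,\<alpha>1)" "(c2,\<alpha>2)" e "k - j1 - j2"]]
            by (intro mult_mono) (auto intro: mult_mono)
          finally show "norm (?p * \<i> ^ (mi_abs \<alpha>1 + mi_abs \<alpha>2) * mi_pow j1 \<alpha>1 * mi_pow j2 \<alpha>2)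
               \<le> B (d2poly (c1,\<alpha>1) (c2,\<alpha>2) (N e)) * (?W * ?R)" by (simp add: mult.assoc)
        qed
        also have "\<dots> = (\<Sum>\<alpha>1\<in>mis_le r. \<Sum>\<alpha>2\<in>mis_le r. B (d2poly (c1,\<alpha>1) (c2,\<alpha>2) (N e))) * (?W * ?R)"
          by (simp add: sum_distrib_right)
        finally show ?thesis .
      qed
      have "norm (d2Nk r N a k j1 j2) \<le> (\<Sum>e\<in>UNIV. norm (d2Nk r N a k j1 j2 $ e))" by (rule norm_vec_le_sum)
      also have "\<dots> \<le> (\<Sum>e\<in>UNIV. \<Sum>c1\<in>UNIV. norm (d2Nk r N a k j1 j2 $ e $ c1))"
        by (intro sum_mono norm_vec_le_sum)
      also have "\<dots> \<le> (\<Sum>e\<in>UNIV. \<Sum>c1\<in>UNIV. \<Sum>c2\<in>UNIV. norm (d2Nk r N a k j1 j2 $ e $ c1 $ c2))"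
        by (intro sum_mono norm_vec_le_sum)
      also have "\<dots> \<le> (\<Sum>e\<in>UNIV. \<Sum>c1\<in>UNIV. \<Sum>c2\<in>UNIV.
            (\<Sum>\<alpha>1\<in>mis_le r. \<Sum>\<alpha>2\<in>mis_le r. B (d2poly (c1,\<alpha>1) (c2,\<alpha>2) (N e))) * (?W * ?R))"
        by (intro sum_mono ent)
      also have "\<dots> = D2 * (?W * ?R)" unfolding D2_def by (simp add: sum_distrib_right)
      finally show "norm (d2Nk r N a k j1 j2) \<le> D2 * (?W * ?R)" .
    qed

    show "(\<forall>k e. poly_abs_conv a (N e) k) \<and>
      (\<forall>k e c \<alpha>. poly_abs_conv a (dpoly (c,\<alpha>) (N e)) k) \<and>
      (\<forall>k e c1 c2 \<alpha>1 \<alpha>2. poly_abs_conv a (d2poly (c1,\<alpha>1) (c2,\<alpha>2) (N e)) k) \<and>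
      (\<forall>k. k \<noteq> 0 \<longrightarrow> norm (Nk N a k) \<le> D / nrm k powr (s - real r)) \<and>
      norm (Nk N a 0) \<le> D \<and>
      (\<forall>k j. k \<noteq> j \<longrightarrow>
          norm (dNk r N a k j) \<le> D1 * nrm0 nrm j ^ r / nrm (k - j) powr (s - real r)) \<and>
      (\<forall>j. norm (dNk r N a j j) \<le> D1 * nrm0 nrm j ^ r) \<and>
      (\<forall>k j1 j2. k \<noteq> j1 + j2 \<longrightarrow>
          norm (d2Nk r N a k j1 j2)
            \<le> D2 * nrm0 nrm j1 ^ r * nrm0 nrm j2 ^ r / nrm (k - j1 - j2) powr (s - real r)) \<and>
      (\<forall>j1 j2. norm (d2Nk r N a (j1 + j2) j1 j2) \<le> D2 * nrm0 nrm j1 ^ r * nrm0 nrm j2 ^ r)"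
    proof (intro conjI allI impI)
      show "poly_abs_conv a (N e) k" for k e using PB[OF ord0] by blast
      show "poly_abs_conv a (dpoly (c,\<alpha>) (N e)) k" for k e c \<alpha> using PB[OF ord1] by blast
      show "poly_abs_conv a (d2poly (c1,\<alpha>1) (c2,\<alpha>2) (N e)) k" for k e c1 c2 \<alpha>1 \<alpha>2 using PB[OF ord2] by blast
      show "norm (Nk N a k) \<le> D / nrm k powr (s - real r)" if "k \<noteq> 0" for k
        using nk[of k] w_nz[OF that] by simp
      show "norm (Nk N a 0) \<le> D" using nk[of 0] by (simp add: wgt_zero)
      show "norm (dNk r N a k j) \<le> D1 * nrm0 nrm j ^ r / nrm (k - j) powr (s - real r)" if "k \<noteq> j" for k j
        using dk[of k j] w_nz[of "k - j"] that by simp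
      show "norm (dNk r N a j j) \<le> D1 * nrm0 nrm j ^ r" for j
        using dk[of j j] by (simp add: wgt_zero)
      show "norm (d2Nk r N a k j1 j2) \<le> D2 * nrm0 nrm j1 ^ r * nrm0 nrm j2 ^ r / nrm (k - j1 - j2) powr (s - real r)"
        if "k \<noteq> j1 + j2" for k j1 j2
      proof -
        have "k - j1 - j2 \<noteq> 0" using that by (metis diff_diff_eq eq_iff_diff_eq_0)
        thus ?thesis using d2k[of k j1 j2] w_nz[of "k - j1 - j2"] by (simp add: mult.assoc)
      qed
      show "norm (d2Nk r N a (j1 + j2) j1 j2) \<le> D2 * nrm0 nrm j1 ^ r * nrm0 nrm j2 ^ r" for j1 j2
        using d2k[of "j1 + j2" j1 j2] by (simp add: wgt_zero mult.assoc)
    qed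
  qed
qed


end
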